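(* In the game $\mathcal{B}_0(120,6)$, every pure strategy $s\in S$ that allocates a positive number of units to at most two battlefields (i.e. $|\{k:s_k>0\}|\le 2$) is not used with positive probability in any Nash equilibrium.
   Context: Fix integers $N\ge1$, $K\ge2$ and a real number $\alpha$. The Colonel Blotto game $\mathcal{B}_\alpha(N,K)$ is the two-player simultaneous-move game with players $A,B$, each with pure strategy set $S=\{s\in\{0,1,\ldots,N\}^K:\sum_{k=1}^K s_k=N\}$, in which the payoff of player $i$ at the pure profile $(s^i,s^{-i})$ is $\pi^i(s^i,s^{-i})=\sum_{k=1}^K\big(\mathbf 1[s^i_k>s^{-i}_k]+\tfrac{\alpha}{2}\mathbf 1[s^i_k=s^{-i}_k]\big)$. Mixed strategies are probability distributions on $S$, with expected payoffs under independent randomization; a Nash equilibrium is a mixed profile from which no unilateral deviation raises a player's expected payoff. *)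

theory Defs
  imports Complex_Main
begin

definition blotto_S :: "nat \<Rightarrow> nat \<Rightarrow> (nat \<Rightarrow> nat) set" where
  "blotto_S N K = {s. (\<forall>k\<ge>K. s k = 0) \<and> (\<Sum>k<K. s k) = N}"

definition blotto_payoff :: "real \<Rightarrow> nat \<Rightarrow> (nat \<Rightarrow> nat) \<Rightarrow> (nat \<Rightarrow> nat) \<Rightarrow> real" where
  "blotto_payoff \<alpha> K s t =
     (\<Sum>k<K. (if s k > t k then 1 else 0) + \<alpha> / 2 * (if s k = t k then 1 else 0))"

definition mixed_strategy :: "nat \<Rightarrow> nat \<Rightarrow> ((nat \<Rightarrow> nat) \<Rightarrow> real) \<Rightarrow> bool" where
  "mixed_strategy N K p \<longleftrightarrow>
     (\<forall>s. s \<notin> blotto_S N K \<longrightarrow> p s = 0) \<and>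
     (\<forall>s. p s \<ge> 0) \<and> (\<Sum>s\<in>blotto_S N K. p s) = 1"

definition expected_payoff ::
  "real \<Rightarrow> nat \<Rightarrow> nat \<Rightarrow> ((nat \<Rightarrow> nat) \<Rightarrow> real) \<Rightarrow> ((nat \<Rightarrow> nat) \<Rightarrow> real) \<Rightarrow> real" where
  "expected_payoff \<alpha> N K p q =
     (\<Sum>s\<in>blotto_S N K. \<Sum>t\<in>blotto_S N K. p s * q t * blotto_payoff \<alpha> K s t)"

definition nash_eq ::
  "real \<Rightarrow> nat \<Rightarrow> nat \<Rightarrow> ((nat \<Rightarrow> nat) \<Rightarrow> real) \<Rightarrow> ((nat \<Rightarrow> nat) \<Rightarrow> real) \<Rightarrow> bool" where
  "nash_eq \<alpha> N K pA pB \<longleftrightarrow>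
     mixed_strategy N K pA \<and> mixed_strategy N K pB \<and>
     (\<forall>p'. mixed_strategy N K p' \<longrightarrow>
        expected_payoff \<alpha> N K p' pB \<le> expected_payoff \<alpha> N K pA pB) \<and>
     (\<forall>q'. mixed_strategy N K q' \<longrightarrow>
        expected_payoff \<alpha> N K q' pA \<le> expected_payoff \<alpha> N K pB pA)"

end

theory Submission imports Defs begin
definition v6 :: "nat \<Rightarrow> nat \<Rightarrow> nat" where
  "v6 r = (\<lambda>k. if k < 6 then 8 * ((k + r) mod 6) else 0)"
lemma s6: fixes f :: "nat \<Rightarrow> 'a::comm_monoid_add"
  shows "(\<Sum>k<6. f k) = f 0 + f 1 + f 2 + f 3 + f 4 + f 5"
proof -
  have "{..<6::nat} = {0,1,2,3,4,5}" by auto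
  then show ?thesis by (simp add: add.assoc)
qed
lemma v6_in: "r < 6 \<Longrightarrow> v6 r \<in> blotto_S 120 6"
proof -
  assume "r < 6"
  then have "r = 0 \<or> r = 1 \<or> r = 2 \<or> r = 3 \<or> r = 4 \<or> r = 5" by auto
  moreover have "\<forall>k\<ge>6. v6 r k = 0" by (simp add: v6_def)
  ultimately show ?thesis unfolding blotto_S_def
    by (auto simp: s6 v6_def)
qed
lemma F0: "(\<Sum>m<6. if 8 * m > x then 1 else 0 :: real) \<ge> 5 - real x / 8"
proof -
  have e: "(\<Sum>m<6. if 8 * m > x then 1 else 0 :: real) =
     (if 0 > x then 1 else 0) + (if 8 > x then 1 else 0) + (if 16 > x then 1 else 0)
    + (if 24 > x then 1 else 0) + (if 32 > x then 1 else 0) + (if 40 > x then 1 else 0)"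
    by (simp add: s6)
  show ?thesis unfolding e by simp
qed

lemma Fbound: "k < 6 \<Longrightarrow> (\<Sum>r<6. if 8 * ((k + r) mod 6) > x then 1 else 0 :: real) \<ge> 5 - real x / 8"
proof -
  assume "k < 6"
  then have "k = 0 \<or> k = 1 \<or> k = 2 \<or> k = 3 \<or> k = 4 \<or> k = 5" by auto
  then show ?thesis using F0[of x] by (elim disjE; simp add: s6 ac_simps)
qed

lemma v6_inj: "inj_on v6 {..<6}"
proof (rule inj_onI)
  fix a b assume "a \<in> {..<6}" "b \<in> {..<6}" "v6 a = v6 b"
  then have "v6 a 0 = v6 b 0" by simp
  with \<open>a \<in> {..<6}\<close> \<open>b \<in> {..<6}\<close> show "a = b" by (simp add: v6_def)
qed

lemma payoff0: "blotto_payoff 0 6 s t = (\<Sum>k<6. if t k < s k then 1 else 0)"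
  by (simp add: blotto_payoff_def)

lemma key:
  assumes "t \<in> blotto_S 120 6"
  shows "(\<Sum>r<6. blotto_payoff 0 6 (v6 r) t) \<ge> 15"
proof -
  have tsum: "(\<Sum>k<6. real (t k)) = 120"
    using assms unfolding blotto_S_def by (simp flip: of_nat_sum)
  have "(\<Sum>r<6. blotto_payoff 0 6 (v6 r) t)
      = (\<Sum>r<6. \<Sum>k<6. if t k < 8 * ((k + r) mod 6) then 1 else (0::real))"
    unfolding payoff0 by (intro sum.cong refl) (simp add: v6_def)
  also have "\<dots> = (\<Sum>k<6. \<Sum>r<6. if t k < 8 * ((k + r) mod 6) then 1 else (0::real))"
    by (rule sum.swap)
  also have "\<dots> \<ge> (\<Sum>k<6. 5 - real (t k) / 8)"
    by (intro sum_mono Fbound) simp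
  also have "(\<Sum>k<6. 5 - real (t k) / 8) = 30 - (\<Sum>k<6. real (t k)) / 8"
    by (simp add: sum_subtractf sum_divide_distrib)
  finally show ?thesis using tsum by simp
qed

lemma low:
  assumes "card {k. k < 6 \<and> s k > 0} \<le> 2"
  shows "blotto_payoff 0 6 s t \<le> 2"
proof -
  have "blotto_payoff 0 6 s t \<le> (\<Sum>k<6. if 0 < s k then 1 else (0::real))"
    unfolding payoff0 by (intro sum_mono) auto
  also have "\<dots> = (\<Sum>k\<in>{k\<in>{..<6}. 0 < s k}. 1)"
    by (rule sum.inter_filter[symmetric]) simp
  also have "\<dots> = real (card {k\<in>{..<6}. 0 < s k})" by simp
  also have "{k\<in>{..<6}. 0 < s k} = {k. k < 6 \<and> s k > 0}" by auto
  finally show ?thesis using assms by simp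
qed

lemma not_in_support:
  assumes mp: "mixed_strategy 120 6 p" and mq: "mixed_strategy 120 6 q"
    and br: "\<forall>p'. mixed_strategy 120 6 p' \<longrightarrow>
        expected_payoff 0 120 6 p' q \<le> expected_payoff 0 120 6 p q"
    and sS: "s \<in> blotto_S 120 6"
    and sc: "card {k. k < 6 \<and> s k > 0} \<le> 2"
  shows "p s = 0"
proof -
  let ?S = "blotto_S 120 6"
  have fin: "finite ?S"
  proof (rule ccontr)
    assume "infinite ?S"
    then have "(\<Sum>x\<in>?S. q x) = 0" by simp
    with mq show False unfolding mixed_strategy_def by simp
  qed
  have q0: "\<And>t. q t \<ge> 0" and q1: "(\<Sum>t\<in>?S. q t) = 1"
    using mq unfolding mixed_strategy_def by auto
  have p0: "\<And>t. p t \<ge> 0" and p1: "(\<Sum>t\<in>?S. p t) = 1"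
    and pout: "\<And>t. t \<notin> ?S \<Longrightarrow> p t = 0"
    using mp unfolding mixed_strategy_def by auto
  define G where "G x = (\<Sum>t\<in>?S. q t * blotto_payoff 0 6 x t)" for x
  have E: "expected_payoff 0 120 6 p' q = (\<Sum>x\<in>?S. p' x * G x)" for p'
    unfolding expected_payoff_def G_def by (simp add: sum_distrib_left mult.assoc)
  define \<sigma> where "\<sigma> x = (if x \<in> v6 ` {..<6} then 1/6 else (0::real))" for x
  have sub: "v6 ` {..<6} \<subseteq> ?S" using v6_in by auto
  have sumsig: "(\<Sum>x\<in>?S. \<sigma> x * f x) = (\<Sum>r<6. f (v6 r)) / 6" for f :: "(nat \<Rightarrow> nat) \<Rightarrow> real"
  proof -
    have "(\<Sum>x\<in>?S. \<sigma> x * f x) = (\<Sum>x\<in>v6 ` {..<6}. \<sigma> x * f x)"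
      by (rule sum.mono_neutral_right[OF fin sub]) (auto simp: \<sigma>_def)
    also have "\<dots> = (\<Sum>x\<in>v6 ` {..<6}. f x / 6)"
      by (intro sum.cong refl) (auto simp: \<sigma>_def)
    also have "\<dots> = (\<Sum>r<6. f (v6 r) / 6)"
      by (simp add: sum.reindex[OF v6_inj])
    finally show ?thesis by (simp add: sum_divide_distrib)
  qed
  have sig1: "(\<Sum>x\<in>?S. \<sigma> x) = 1"
    using sumsig[of "\<lambda>_. 1"] by simp
  have sig0: "\<And>x. \<sigma> x \<ge> 0" by (simp add: \<sigma>_def)
  have sigout: "\<And>x. x \<notin> ?S \<Longrightarrow> \<sigma> x = 0" using sub by (auto simp: \<sigma>_def)
  have Gsig: "(\<Sum>x\<in>?S. \<sigma> x * G x) \<ge> 5/2"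
  proof -
    have "15 = (\<Sum>t\<in>?S. q t * 15)" using q1 by (simp add: sum_distrib_right[symmetric])
    also have "\<dots> \<le> (\<Sum>t\<in>?S. q t * (\<Sum>r<6. blotto_payoff 0 6 (v6 r) t))"
      by (intro sum_mono mult_left_mono key q0)
    also have "\<dots> = (\<Sum>r<6. G (v6 r))"
      unfolding G_def by (simp add: sum_distrib_left sum.swap[of _ "{..<6}"])
    finally have "15 \<le> (\<Sum>r<6. G (v6 r))" .
    then show ?thesis using sumsig[of G] by simp
  qed
  have Gs: "G s \<le> 2"
  proof -
    have "G s \<le> (\<Sum>t\<in>?S. q t * 2)"
      unfolding G_def by (intro sum_mono mult_left_mono low[OF sc] q0)
    also have "\<dots> = 2" using q1 by (simp add: sum_distrib_right[symmetric])
    finally show ?thesis .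
  qed
  define p' where "p' x = p x - (if x = s then p s else 0) + p s * \<sigma> x" for x
  have sumsplit: "(\<Sum>x\<in>?S. p' x * f x) = (\<Sum>x\<in>?S. p x * f x) - p s * f s + p s * (\<Sum>x\<in>?S. \<sigma> x * f x)"
    for f :: "(nat \<Rightarrow> nat) \<Rightarrow> real"
  proof -
    have "(\<Sum>x\<in>?S. p' x * f x) = (\<Sum>x\<in>?S. p x * f x - (if x = s then p s * f s else 0) + p s * (\<sigma> x * f x))"
      by (intro sum.cong refl) (simp add: p'_def algebra_simps)
    also have "\<dots> = (\<Sum>x\<in>?S. p x * f x) - p s * f s + p s * (\<Sum>x\<in>?S. \<sigma> x * f x)"
      using fin sS by (simp add: sum.distrib sum_subtractf sum_distrib_left)
    finally show ?thesis .
  qed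
  have mp': "mixed_strategy 120 6 p'"
    unfolding mixed_strategy_def
  proof (intro conjI allI impI)
    fix x assume "x \<notin> ?S"
    then show "p' x = 0" using pout sigout sS by (auto simp: p'_def)
  next
    fix x show "p' x \<ge> 0" using p0 sig0 by (auto simp: p'_def)
  next
    show "(\<Sum>x\<in>?S. p' x) = 1" using sumsplit[of "\<lambda>_. 1"] p1 sig1 by simp
  qed
  have "expected_payoff 0 120 6 p' q \<le> expected_payoff 0 120 6 p q" using br mp' by blast
  then have "(\<Sum>x\<in>?S. p x * G x) - p s * G s + p s * (\<Sum>x\<in>?S. \<sigma> x * G x) \<le> (\<Sum>x\<in>?S. p x * G x)"
    unfolding E sumsplit .
  then have "p s * ((\<Sum>x\<in>?S. \<sigma> x * G x) - G s) \<le> 0" by (simp add: algebra_simps)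
  moreover have "p s * (1/2) \<le> p s * ((\<Sum>x\<in>?S. \<sigma> x * G x) - G s)"
    using Gsig Gs p0[of s] by (intro mult_left_mono) auto
  ultimately show ?thesis using p0[of s] by linarith
qed

theorem corollary2:
  fixes pA pB :: "(nat \<Rightarrow> nat) \<Rightarrow> real" and s :: "nat \<Rightarrow> nat"
  assumes "nash_eq 0 120 6 pA pB"
    and "s \<in> blotto_S 120 6"
    and "card {k. k < 6 \<and> s k > 0} \<le> 2"
  shows "pA s = 0 \<and> pB s = 0"
  using assms not_in_support[of pA pB s] not_in_support[of pB pA s]
  unfolding nash_eq_def by blast

end
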